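(* In the fermionic setting described in the context, if $g\in\mathrm{SO}_*(V)$ then the Gaussian vector $f_{T_g}\in\mathcal F(V)$ satisfies $$a_{gJg^{-1}}(gv)\,f_{T_g}=0\quad\text{for all }v\in V,$$ where $a_{gJg^{-1}}(gv)=\tfrac12\bigl(\psi(gv)+i\,\psi(gJv)\bigr)$.
   Context: Let $V$ be a real vector space of dimension $2m$ with a positive definite symmetric bilinear form $d$ and a real-linear $J$ with $J^2=-1$ and $d(Ju,Jv)=d(u,v)$. Put $s(u,v):=d(Ju,v)$; make $V$ a complex vector space by $(a+bi)v:=av+bJv$ with Hermitian inner product $\langle u|v\rangle:=d(u,v)+is(u,v)$ (antilinear in $u$). $A^t$ is the $d$-transpose. For $g\in\mathrm{SO}(V)$ let $p_g:=\tfrac12(g-JgJ)$, $q_g:=\tfrac12(g+JgJ)$; $\mathrm{SO}_*(V)$ is the set of $g\in\mathrm{SO}(V)$ with $p_g$ invertible, and for such $g$, $T_g:=q_gp_g^{-1}$ (antilinear and $d$-skew-symmetric). The fermionic Fock space $\mathcal F(V)$ is the exterior algebra $\Lambda(V)$ of the complex space $V$ with inner product $\langle u_1\wedge\dots\wedge u_k|v_1\wedge\dots\wedge v_l\rangle=\delta_{kl}\det[\langle u_i|v_j\rangle]$ and unit vacuum $\Omega\in\Lambda^0$. Creation: $a^\dagger(v)\xi:=v\wedge\xi$; annihilation: $a(v)(v_1\wedge\dots\wedge v_k):=\sum_j(-1)^{j-1}\langle v|v_j\rangle v_1\wedge\dots\widehat{v_j}\dots\wedge v_k$, $a(v)\Omega=0$;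 field $\psi(v):=a^\dagger(v)+a(v)$. For a complex structure $K$ on $V$, $a_K(w):=\tfrac12(\psi(w)+i\psi(Kw))$. For an antilinear $d$-skew-symmetric $T$ and an orthonormal basis $e_1,\dots,e_m$ of $V$, $H_T:=\sum_{i,j}\langle e_i|Te_j\rangle e_i\wedge e_j$ and the Gaussian is $f_T:=\sum_{0\le 2r\le m}\frac{1}{2^rr!}H_T^{\wedge r}$ (independent of the basis). *)

theory Defs
  imports "HOL-Analysis.Analysis"
begin

text \<open>The real space V is real^'n (with CARD('n) = 2m); d is the standard inner product.
  The complex structure J turns V into a complex space.\<close>

definition cmul :: "(real^'n \<Rightarrow> real^'n) \<Rightarrow> complex \<Rightarrow> real^'n \<Rightarrow> real^'n" where
  "cmul J z v = Re z *\<^sub>R v + Im z *\<^sub>R J v"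

definition hip :: "(real^'n \<Rightarrow> real^'n) \<Rightarrow> real^'n \<Rightarrow> real^'n \<Rightarrow> complex" where
  "hip J u v = Complex (u \<bullet> v) (J u \<bullet> v)"

definition is_complex_structure :: "(real^'n \<Rightarrow> real^'n) \<Rightarrow> bool" where
  "is_complex_structure J \<longleftrightarrow> linear J \<and> (\<forall>v. J (J v) = - v) \<and> (\<forall>u v. J u \<bullet> J v = u \<bullet> v)"

definition SO_space :: "(real^'n \<Rightarrow> real^'n) set" where
  "SO_space = {g. orthogonal_transformation g \<and> det (matrix g) = 1}"

definition pg :: "(real^'n \<Rightarrow> real^'n) \<Rightarrow> (real^'n \<Rightarrow> real^'n) \<Rightarrow> real^'n \<Rightarrow> real^'n" where
  "pg J g v = (1/2) *\<^sub>R (g v - J (g (J v)))"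

definition qg :: "(real^'n \<Rightarrow> real^'n) \<Rightarrow> (real^'n \<Rightarrow> real^'n) \<Rightarrow> real^'n \<Rightarrow> real^'n" where
  "qg J g v = (1/2) *\<^sub>R (g v + J (g (J v)))"

definition SO_star :: "(real^'n \<Rightarrow> real^'n) \<Rightarrow> (real^'n \<Rightarrow> real^'n) set" where
  "SO_star J = {g \<in> SO_space. bij (pg J g)}"

definition Tg :: "(real^'n \<Rightarrow> real^'n) \<Rightarrow> (real^'n \<Rightarrow> real^'n) \<Rightarrow> real^'n \<Rightarrow> real^'n" where
  "Tg J g = qg J g \<circ> inv (pg J g)"

text \<open>Model of the Fock space Lambda(V): an element xi = sum_k xi_k, xi_k in Lambda^k(V),
  is represented by the function on lists [u_1,...,u_k] of vectors given by
  xi_k(u_1,...,u_k), where v_1 \<and> ... \<and> v_k corresponds to (u_1..u_k) \<mapsto> det[<u_i|v_j>].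
  This identifies Lambda^k(V) with the alternating (complex-)antilinear k-forms on V.\<close>

type_synonym 'n fock = "(real^'n) list \<Rightarrow> complex"

definition fock_zero :: "'n fock" where
  "fock_zero = (\<lambda>us. 0)"

definition fock_add :: "'n fock \<Rightarrow> 'n fock \<Rightarrow> 'n fock" where
  "fock_add F G = (\<lambda>us. F us + G us)"

definition fock_smult :: "complex \<Rightarrow> 'n fock \<Rightarrow> 'n fock" where
  "fock_smult c F = (\<lambda>us. c * F us)"

definition vacuum :: "'n fock" where
  "vacuum = (\<lambda>us. if us = [] then 1 else 0)"

definition vec1 :: "(real^'n \<Rightarrow> real^'n) \<Rightarrow> real^'n \<Rightarrow> 'n fock" where
  "vec1 J w = (\<lambda>us. if length us = 1 then hip J (us ! 0) w else 0)"

text \<open>Exterior (wedge) product, with the determinant normalisation.\<close>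
definition fwedge :: "'n fock \<Rightarrow> 'n fock \<Rightarrow> 'n fock" where
  "fwedge F G = (\<lambda>us. let n = length us in
     \<Sum>k\<in>{0..n}. complex_of_real (1 / (fact k * fact (n - k))) *
       (\<Sum>\<sigma>\<in>{\<sigma>. \<sigma> permutes {..<n}}.
          of_int (sign \<sigma>) * F (take k (permute_list \<sigma> us)) * G (drop k (permute_list \<sigma> us))))"

definition creation :: "(real^'n \<Rightarrow> real^'n) \<Rightarrow> real^'n \<Rightarrow> 'n fock \<Rightarrow> 'n fock" where
  "creation J v F = fwedge (vec1 J v) F"

text \<open>Annihilation a(v): in the form model, a(v)(v_1\<and>...\<and>v_k) =
  sum_j (-1)^(j-1) <v|v_j> v_1..^v_j..v_k  is exactly  (u_1..u_{k-1}) \<mapsto> xi(v,u_1,..,u_{k-1})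
  (Laplace expansion along the first row); a(v) Omega = 0.\<close>
definition annihilation :: "real^'n \<Rightarrow> 'n fock \<Rightarrow> 'n fock" where
  "annihilation v F = (\<lambda>us. F (v # us))"

definition field_op :: "(real^'n \<Rightarrow> real^'n) \<Rightarrow> real^'n \<Rightarrow> 'n fock \<Rightarrow> 'n fock" where
  "field_op J v F = fock_add (creation J v F) (annihilation v F)"

definition aK :: "(real^'n \<Rightarrow> real^'n) \<Rightarrow> (real^'n \<Rightarrow> real^'n) \<Rightarrow> real^'n \<Rightarrow> 'n fock \<Rightarrow> 'n fock" where
  "aK J K w F = fock_smult (1/2) (fock_add (field_op J w F) (fock_smult \<i> (field_op J (K w) F)))"

definition orthonormal_cbasis :: "(real^'n \<Rightarrow> real^'n) \<Rightarrow> nat \<Rightarrow> (nat \<Rightarrow> real^'n) \<Rightarrow> bool" where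
  "orthonormal_cbasis J m e \<longleftrightarrow>
     (\<forall>i<m. \<forall>j<m. hip J (e i) (e j) = (if i = j then 1 else 0)) \<and>
     (\<forall>v. \<exists>c. v = (\<Sum>i<m. cmul J (c i) (e i)))"

definition H_T :: "(real^'n \<Rightarrow> real^'n) \<Rightarrow> nat \<Rightarrow> (nat \<Rightarrow> real^'n) \<Rightarrow> (real^'n \<Rightarrow> real^'n) \<Rightarrow> 'n fock" where
  "H_T J m e T = (\<lambda>us. \<Sum>i<m. \<Sum>j<m. hip J (e i) (T (e j)) * fwedge (vec1 J (e i)) (vec1 J (e j)) us)"

fun fwedge_pow :: "'n fock \<Rightarrow> nat \<Rightarrow> 'n fock" where
  "fwedge_pow H 0 = vacuum"
| "fwedge_pow H (Suc r) = fwedge H (fwedge_pow H r)"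

definition gaussian :: "(real^'n \<Rightarrow> real^'n) \<Rightarrow> nat \<Rightarrow> (nat \<Rightarrow> real^'n) \<Rightarrow> (real^'n \<Rightarrow> real^'n) \<Rightarrow> 'n fock" where
  "gaussian J m e T = (\<lambda>us. \<Sum>r\<in>{r. 2 * r \<le> m}.
      complex_of_real (1 / (2 ^ r * fact r)) * fwedge_pow (H_T J m e T) r us)"

end

theory Submission
  imports Defs
begin

definition altf :: "('a list \<Rightarrow> complex) \<Rightarrow> bool" where
  "altf F \<longleftrightarrow> (\<forall>ws \<sigma>. \<sigma> permutes {..<length ws} \<longrightarrow> F (permute_list \<sigma> ws) = of_int (sign \<sigma>) * F ws)"

definition homf :: "nat \<Rightarrow> ('a list \<Rightarrow> complex) \<Rightarrow> bool" where
  "homf k F \<longleftrightarrow> (\<forall>ws. length ws \<noteq> k \<longrightarrow> F ws = 0)"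

definition shp :: "(nat \<Rightarrow> nat) \<Rightarrow> nat \<Rightarrow> nat" where
  "shp q = (\<lambda>i. case i of 0 \<Rightarrow> 0 | Suc j \<Rightarrow> Suc (q j))"

lemma shp_id: "shp id = id"
  by (auto simp: shp_def fun_eq_iff split: nat.split)

lemma shp_comp: "shp (p \<circ> q) = shp p \<circ> shp q"
  by (auto simp: shp_def fun_eq_iff split: nat.split)

lemma shp_transpose: "shp (Transposition.transpose a b) = Transposition.transpose (Suc a) (Suc b)"
  by (auto simp: shp_def fun_eq_iff Transposition.transpose_def split: nat.split)

lemma swapidseq_shp: "swapidseq n p \<Longrightarrow> swapidseq n (shp p)"
proof (induction rule: swapidseq.induct)
  case id
  show ?case by (metis shp_id swapidseq.id id_def)
next
  case (comp_Suc n p a b)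
  then show ?case unfolding shp_comp shp_transpose by (intro swapidseq.comp_Suc) auto
qed

lemma sign_shp: assumes "permutation p" shows "sign (shp p) = sign p"
proof -
  obtain n where n: "swapidseq n p" using assms unfolding permutation_def by blast
  have "evenperm p = even n" "evenperm (shp p) = even n"
    using evenperm_unique n swapidseq_shp by blast+
  then show ?thesis by (simp add: sign_def)
qed

lemma shp_permutes: assumes "q permutes {..<n}" shows "shp q permutes {..<Suc n}"
  unfolding permutes_def
proof (intro conjI allI impI)
  fix x assume "x \<notin> {..<Suc n}"
  then obtain j where x: "x = Suc j" "j \<notin> {..<n}"
    by (metis lessThan_iff not_less_eq not0_implies_Suc zero_less_Suc)
  have "q j = j" by (rule permutes_not_in[OF assms x(2)])
  then show "shp q x = x" using x by (simp add: shp_def)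
next
  fix y
  have "shp q \<circ> shp (inv q) = id" "shp (inv q) \<circ> shp q = id"
    using permutes_inv_o[OF assms] by (simp_all add: shp_comp[symmetric] shp_id)
  then have "bij (shp q)" using o_bij by blast
  then show "\<exists>!x. shp q x = y" unfolding bij_iff by blast
qed

lemma permute_list_shp:
  assumes "q permutes {..<length us}"
  shows "permute_list (shp q) (u # us) = u # permute_list q us"
proof (rule nth_equalityI)
  show "length (permute_list (shp q) (u # us)) = length (u # permute_list q us)" by simp
next
  fix i assume i: "i < length (permute_list (shp q) (u # us))"
  have "permute_list (shp q) (u # us) ! i = (u # us) ! shp q i"
    using i shp_permutes[OF assms] by (intro permute_list_nth) auto
  then show "permute_list (shp q) (u # us) ! i = (u # permute_list q us) ! i"
    using assms i by (cases i) (auto simp: permute_list_nth shp_def)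
qed

definition insp :: "nat \<Rightarrow> nat \<Rightarrow> nat" where
  "insp b = (\<lambda>i. if i < b then Suc i else if i = b then 0 else i)"

lemma insp_0: "insp 0 = id" by (auto simp: insp_def fun_eq_iff)

lemma insp_Suc: "insp (Suc b) = insp b \<circ> Transposition.transpose b (Suc b)"
  by (auto simp: insp_def fun_eq_iff Transposition.transpose_def)

lemma swapidseq_insp: "swapidseq b (insp b)"
proof (induction b)
  case 0 show ?case unfolding insp_0 by (rule swapidseq.id)
next
  case (Suc b)
  have "swapidseq (b + 1) (insp b \<circ> Transposition.transpose b (Suc b))"
    using swapidseq_comp_add[OF Suc swapidseq_swap[of b "Suc b"]] by simp
  then show ?case unfolding insp_Suc by (simp only: Suc_eq_plus1)
qed

lemma permutation_insp: "permutation (insp b)"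
  using swapidseq_insp permutation_def by blast

lemma sign_insp: "sign (insp b) = (-1) ^ b"
proof -
  have "evenperm (insp b) = even b" using evenperm_unique swapidseq_insp by blast
  then show ?thesis by (simp add: sign_def)
qed

lemma insp_permutes: "b < N \<Longrightarrow> insp b permutes {..<N}"
proof (induction b)
  case 0 show ?case unfolding insp_0 by (rule permutes_id)
next
  case (Suc b)
  then show ?case unfolding insp_Suc
    by (intro permutes_compose permutes_swap_id) auto
qed

lemma permute_list_insp:
  assumes "b \<le> length ys"
  shows "permute_list (insp b) (x # ys) = take b ys @ x # drop b ys"
proof (rule nth_equalityI)
  fix i assume i: "i < length (permute_list (insp b) (x # ys))"
  have e: "permute_list (insp b) (x # ys) ! i = (x # ys) ! insp b i"
    using i assms by (intro permute_list_nth insp_permutes) auto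
  have lt: "length (take b ys) = b" using assms by simp
  consider "i < b" | "i = b" | "b < i" by linarith
  then show "permute_list (insp b) (x # ys) ! i = (take b ys @ x # drop b ys) ! i"
  proof cases
    case 1 then show ?thesis unfolding e using lt by (simp add: insp_def nth_append)
  next
    case 2 then show ?thesis unfolding e using lt by (simp add: insp_def nth_append)
  next
    case 3
    then obtain k where k: "i = Suc (b + k)" by (metis less_imp_Suc_add)
    then show ?thesis unfolding e using lt i assms by (simp add: insp_def nth_append)
  qed
qed (use assms in simp)


lemma permutation_of_permutes: "p permutes {..<(n::nat)} \<Longrightarrow> permutation p"
  using permutation_permutes by blast

lemma sum_perm_left:
  assumes "\<pi> permutes {..<n}"
  shows "(\<Sum>\<sigma>\<in>{\<sigma>. \<sigma> permutes {..<n}}. f (\<pi> \<circ> \<sigma>)) = (\<Sum>\<sigma>\<in>{\<sigma>. \<sigma> permutes {..<n}}. f \<sigma>)"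
proof -
  let ?P = "{\<sigma>. \<sigma> permutes {..<n}}"
  have inj: "inj_on (\<lambda>\<sigma>. \<pi> \<circ> \<sigma>) ?P"
    using permutes_inj[OF assms] by (auto simp: inj_on_def fun_eq_iff inj_def)
  have img: "(\<lambda>\<sigma>. \<pi> \<circ> \<sigma>) ` ?P = ?P"
  proof
    show "(\<lambda>\<sigma>. \<pi> \<circ> \<sigma>) ` ?P \<subseteq> ?P" using assms permutes_compose by blast
    show "?P \<subseteq> (\<lambda>\<sigma>. \<pi> \<circ> \<sigma>) ` ?P"
    proof
      fix \<tau> assume t: "\<tau> \<in> ?P"
      have "\<tau> = \<pi> \<circ> (inv \<pi> \<circ> \<tau>)"
        using permutes_inv_o(1)[OF assms] by (simp add: o_assoc)
      moreover have "inv \<pi> \<circ> \<tau> \<in> ?P" using t permutes_compose permutes_inv[OF assms] by blast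
      ultimately show "\<tau> \<in> (\<lambda>\<sigma>. \<pi> \<circ> \<sigma>) ` ?P" by blast
    qed
  qed
  show ?thesis
    using sum.reindex[OF inj, of f] img by simp
qed

lemma fwedge_eq: "fwedge F G us = (\<Sum>k\<in>{0..length us}. complex_of_real (1 / (fact k * fact (length us - k))) *
       (\<Sum>\<sigma>\<in>{\<sigma>. \<sigma> permutes {..<length us}}.
          of_int (sign \<sigma>) * F (take k (permute_list \<sigma> us)) * G (drop k (permute_list \<sigma> us))))"
  by (simp add: fwedge_def Let_def)

lemma fwedge_alt: fixes F G :: "('n::finite) fock" shows "altf (fwedge F G)"
  unfolding altf_def
proof (intro allI impI)
  fix ws :: "(real^'n) list" and \<pi> assume p: "\<pi> permutes {..<length ws}"
  let ?P = "{\<sigma>. \<sigma> permutes {..<length ws}}"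
  have inner: "(\<Sum>\<sigma>\<in>?P. of_int (sign \<sigma>) * F (take k (permute_list \<sigma> (permute_list \<pi> ws))) * G (drop k (permute_list \<sigma> (permute_list \<pi> ws))))
     = of_int (sign \<pi>) * (\<Sum>\<sigma>\<in>?P. of_int (sign \<sigma>) * F (take k (permute_list \<sigma> ws)) * G (drop k (permute_list \<sigma> ws)))" for k
  proof -
    have "(\<Sum>\<sigma>\<in>?P. of_int (sign \<sigma>) * F (take k (permute_list \<sigma> (permute_list \<pi> ws))) * G (drop k (permute_list \<sigma> (permute_list \<pi> ws))))
      = (\<Sum>\<sigma>\<in>?P. of_int (sign \<pi>) * (of_int (sign (\<pi> \<circ> \<sigma>)) * F (take k (permute_list (\<pi> \<circ> \<sigma>) ws)) * G (drop k (permute_list (\<pi> \<circ> \<sigma>) ws))))"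
    proof (rule sum.cong[OF refl])
      fix \<sigma> assume s: "\<sigma> \<in> ?P"
      have pl: "permute_list (\<pi> \<circ> \<sigma>) ws = permute_list \<sigma> (permute_list \<pi> ws)"
        using s by (intro permute_list_compose) simp
      have "sign (\<pi> \<circ> \<sigma>) = sign \<pi> * sign \<sigma>"
        using s p by (intro sign_compose permutation_of_permutes) auto
      then have "of_int (sign \<pi>) * of_int (sign (\<pi> \<circ> \<sigma>)) = (of_int (sign \<sigma>) :: complex)"
        by (metis mult.assoc mult_1 of_int_mult sign_idempotent)
      then show "of_int (sign \<sigma>) * F (take k (permute_list \<sigma> (permute_list \<pi> ws))) * G (drop k (permute_list \<sigma> (permute_list \<pi> ws)))
        = of_int (sign \<pi>) * (of_int (sign (\<pi> \<circ> \<sigma>)) * F (take k (permute_list (\<pi> \<circ> \<sigma>) ws)) * G (drop k (permute_list (\<pi> \<circ> \<sigma>) ws)))"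
        unfolding pl by (simp add: mult.assoc)
    qed
    also have "\<dots> = of_int (sign \<pi>) * (\<Sum>\<sigma>\<in>?P. of_int (sign \<sigma>) * F (take k (permute_list \<sigma> ws)) * G (drop k (permute_list \<sigma> ws)))"
      unfolding sum_distrib_left[symmetric]
      by (rule arg_cong[where f="\<lambda>x. _ * x"], rule sum_perm_left[OF p, where f="\<lambda>\<sigma>. of_int (sign \<sigma>) * F (take k (permute_list \<sigma> ws)) * G (drop k (permute_list \<sigma> ws))"])
    finally show ?thesis .
  qed
  show "fwedge F G (permute_list \<pi> ws) = of_int (sign \<pi>) * fwedge F G ws"
    unfolding fwedge_eq length_permute_list inner
    by (simp add: sum_distrib_left mult.left_commute)
qed


lemma altf_move:
  assumes "altf F" "b \<le> length ys"
  shows "F (take b ys @ x # drop b ys) = (-1) ^ b * F (x # ys)"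
proof -
  have "insp b permutes {..<length (x # ys)}" using assms(2) by (intro insp_permutes) auto
  then have "F (permute_list (insp b) (x # ys)) = of_int (sign (insp b)) * F (x # ys)"
    using assms(1) unfolding altf_def by blast
  then show ?thesis using assms(2) by (simp add: permute_list_insp sign_insp)
qed

lemma altf_rep:
  assumes "altf F" "x \<in> set ys"
  shows "F (x # ys) = 0"
proof -
  obtain p where p: "p < length ys" "ys ! p = x" using assms(2) by (meson in_set_conv_nth)
  let ?t = "Transposition.transpose 0 (Suc p)"
  have tp: "?t permutes {..<length (x # ys)}" using p by (intro permutes_swap_id) auto
  have "permute_list ?t (x # ys) = x # ys"
  proof (rule nth_equalityI)
    fix i assume i: "i < length (permute_list ?t (x # ys))"
    then have "permute_list ?t (x # ys) ! i = (x # ys) ! (?t i)" using tp by (intro permute_list_nth) auto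
    then show "permute_list ?t (x # ys) ! i = (x # ys) ! i"
      using p by (auto simp: Transposition.transpose_def)
  qed simp
  moreover have "F (permute_list ?t (x # ys)) = of_int (sign ?t) * F (x # ys)"
    using assms(1) tp unfolding altf_def by blast
  ultimately have "F (x # ys) = - F (x # ys)" by (simp add: sign_swap_id)
  then show ?thesis by simp
qed

lemma altf_ann:
  fixes F :: "'a list \<Rightarrow> complex"
  assumes "altf F" shows "altf (\<lambda>ws. F (u # ws))"
  unfolding altf_def
proof (intro allI impI)
  fix ws :: "'a list" and \<sigma> :: "nat \<Rightarrow> nat" assume s: "\<sigma> permutes {..<length ws}"
  have "F (permute_list (shp \<sigma>) (u # ws)) = of_int (sign (shp \<sigma>)) * F (u # ws)"
    using assms shp_permutes[OF s] unfolding altf_def by simp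
  then show "F (u # permute_list \<sigma> ws) = of_int (sign \<sigma>) * F (u # ws)"
    using s by (simp add: permute_list_shp sign_shp permutation_of_permutes)
qed

lemma perms_decomp:
  "(\<lambda>(b, q). shp q \<circ> insp b) ` ({..<Suc n} \<times> {q. q permutes {..<n}}) = {\<sigma>. \<sigma> permutes {..<Suc n}}"
  "inj_on (\<lambda>(b, q). shp q \<circ> insp b) ({..<Suc n} \<times> {q. q permutes {..<n}})"
proof -
  let ?f = "\<lambda>(b, q). shp q \<circ> insp b"
  let ?A = "{..<Suc n} \<times> {q. q permutes {..<n}}"
  show inj: "inj_on ?f ?A"
  proof (rule inj_onI)
    fix x y assume x: "x \<in> ?A" and y: "y \<in> ?A" and e: "?f x = ?f y"
    obtain b q where bq: "x = (b, q)" by force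
    obtain b' q' where bq': "y = (b', q')" by force
    have e': "shp q \<circ> insp b = shp q' \<circ> insp b'" using e bq bq' by simp
    have "(shp q \<circ> insp b) b = 0" by (simp add: insp_def shp_def)
    then have "(shp q' \<circ> insp b') b = 0" using e' by simp
    moreover have "(shp q' \<circ> insp b') b' = 0" by (simp add: insp_def shp_def)
    moreover have "inj (shp q' \<circ> insp b')"
    proof -
      have "q' permutes {..<n}" "b' < Suc n" using y bq' by auto
      then have "shp q' \<circ> insp b' permutes {..<Suc n}"
        by (intro permutes_compose shp_permutes insp_permutes)
      then show ?thesis by (rule permutes_inj)
    qed
    ultimately have bb: "b = b'" by (metis injD)
    have "surj (insp b)" using insp_permutes[of b "Suc b"] permutes_surj by blast
    have "shp q = shp q'"
    proof
      fix i
      obtain j where "i = insp b j" using \<open>surj (insp b)\<close> by (metis surjD)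
      then show "shp q i = shp q' i" using fun_cong[OF e', of j] bb by simp
    qed
    have "q = q'"
    proof
      fix j show "q j = q' j" using fun_cong[OF \<open>shp q = shp q'\<close>, of "Suc j"] by (simp add: shp_def)
    qed
    then show "x = y" using bq bq' bb by simp
  qed
  have sub: "?f ` ?A \<subseteq> {\<sigma>. \<sigma> permutes {..<Suc n}}"
    by (auto intro!: permutes_compose shp_permutes insp_permutes)
  have "card (?f ` ?A) = card ?A" using card_image[OF inj] .
  also have "\<dots> = Suc n * fact n" by (simp add: card_cartesian_product card_permutations)
  also have "\<dots> = card {\<sigma>. \<sigma> permutes {..<Suc n}}" by (simp add: card_permutations)
  finally show "?f ` ?A = {\<sigma>. \<sigma> permutes {..<Suc n}}"
    using sub by (intro card_subset_eq) (auto simp: finite_permutations)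
qed

lemma sum_perms_decomp:
  "(\<Sum>\<sigma>\<in>{\<sigma>. \<sigma> permutes {..<Suc n}}. h \<sigma>) = (\<Sum>b<Suc n. \<Sum>q\<in>{q. q permutes {..<n}}. h (shp q \<circ> insp b))"
proof -
  have "(\<Sum>\<sigma>\<in>{\<sigma>. \<sigma> permutes {..<Suc n}}. h \<sigma>) = (\<Sum>x\<in>{..<Suc n} \<times> {q. q permutes {..<n}}. h ((\<lambda>(b, q). shp q \<circ> insp b) x))"
    using sum.reindex[OF perms_decomp(2), of h] perms_decomp(1) by simp
  also have "\<dots> = (\<Sum>(b, q)\<in>{..<Suc n} \<times> {q. q permutes {..<n}}. h (shp q \<circ> insp b))"
    by (rule sum.cong) (auto split: prod.splits)
  also have "\<dots> = (\<Sum>b<Suc n. \<Sum>q\<in>{q. q permutes {..<n}}. h (shp q \<circ> insp b))"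
    by (rule sum.cartesian_product[symmetric])
  finally show ?thesis .
qed

lemma sign_decomp: "q permutes {..<n} \<Longrightarrow> sign (shp q \<circ> insp b) = sign q * (-1) ^ b"
  by (subst sign_compose) (auto simp: sign_shp sign_insp permutation_insp permutation_of_permutes
      intro: permutation_of_permutes[OF shp_permutes])

lemma permute_list_decomp:
  assumes "q permutes {..<length us}" "b \<le> length us"
  shows "permute_list (shp q \<circ> insp b) (u # us) = take b (permute_list q us) @ u # drop b (permute_list q us)"
proof -
  have "permute_list (shp q \<circ> insp b) (u # us) = permute_list (insp b) (permute_list (shp q) (u # us))"
    using assms by (intro permute_list_compose insp_permutes) auto
  then show ?thesis using assms by (simp add: permute_list_shp permute_list_insp)
qed


lemma fwedge_homL:
  fixes F G :: "('n::finite) fock"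
  assumes "homf k F"
  shows "fwedge F G us = (if k \<le> length us then complex_of_real (1 / (fact k * fact (length us - k))) *
       (\<Sum>\<sigma>\<in>{\<sigma>. \<sigma> permutes {..<length us}}.
          of_int (sign \<sigma>) * F (take k (permute_list \<sigma> us)) * G (drop k (permute_list \<sigma> us))) else 0)"
proof -
  define t where "t j = complex_of_real (1 / (fact j * fact (length us - j))) *
       (\<Sum>\<sigma>\<in>{\<sigma>. \<sigma> permutes {..<length us}}.
          of_int (sign \<sigma>) * F (take j (permute_list \<sigma> us)) * G (drop j (permute_list \<sigma> us)))" for j
  have z: "t j = 0" if "j \<in> {0..length us}" "j \<noteq> k" for j
    using that assms unfolding t_def homf_def by simp
  have "fwedge F G us = (\<Sum>j\<in>{0..length us}. t j)" unfolding fwedge_eq t_def ..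
  also have "\<dots> = (if k \<le> length us then t k else 0)"
  proof (cases "k \<le> length us")
    case True
    then have "(\<Sum>j\<in>{0..length us}. t j) = t k + (\<Sum>j\<in>{0..length us} - {k}. t j)"
      by (intro sum.remove) auto
    also have "(\<Sum>j\<in>{0..length us} - {k}. t j) = 0" using z by (intro sum.neutral) auto
    finally show ?thesis using True by simp
  next
    case False
    then show ?thesis using z by (intro trans[OF sum.neutral]) auto
  qed
  finally show ?thesis unfolding t_def .
qed

lemma fwedge_homR:
  fixes F G :: "('n::finite) fock"
  assumes "homf l G"
  shows "fwedge F G us = (if l \<le> length us then complex_of_real (1 / (fact (length us - l) * fact l)) *
       (\<Sum>\<sigma>\<in>{\<sigma>. \<sigma> permutes {..<length us}}.
          of_int (sign \<sigma>) * F (take (length us - l) (permute_list \<sigma> us)) * G (drop (length us - l) (permute_list \<sigma> us))) else 0)"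
proof -
  define t where "t j = complex_of_real (1 / (fact j * fact (length us - j))) *
       (\<Sum>\<sigma>\<in>{\<sigma>. \<sigma> permutes {..<length us}}.
          of_int (sign \<sigma>) * F (take j (permute_list \<sigma> us)) * G (drop j (permute_list \<sigma> us)))" for j
  have z: "t j = 0" if "j \<in> {0..length us}" "j \<noteq> length us - l" for j
    using that assms unfolding t_def homf_def by auto
  have "fwedge F G us = (\<Sum>j\<in>{0..length us}. t j)" unfolding fwedge_eq t_def ..
  also have "\<dots> = (if l \<le> length us then t (length us - l) else 0)"
  proof (cases "l \<le> length us")
    case True
    then have "(\<Sum>j\<in>{0..length us}. t j) = t (length us - l) + (\<Sum>j\<in>{0..length us} - {length us - l}. t j)"
      by (intro sum.remove) auto
    also have "(\<Sum>j\<in>{0..length us} - {length us - l}. t j) = 0" using z by (intro sum.neutral) auto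
    finally show ?thesis using True by simp
  next
    case False
    have "t j = 0" if "j \<in> {0..length us}" for j
      using that assms False unfolding t_def homf_def by auto
    then show ?thesis using False by (intro trans[OF sum.neutral]) auto
  qed
  finally show ?thesis unfolding t_def using assms by simp
qed

lemma sum_sign_sq:
  "(\<Sum>\<sigma>\<in>{\<sigma>. \<sigma> permutes {..<n}}. (of_int (sign \<sigma>) :: complex) * of_int (sign \<sigma>) * c) = of_nat (fact n) * c"
proof -
  have "(\<Sum>\<sigma>\<in>{\<sigma>. \<sigma> permutes {..<n}}. (of_int (sign \<sigma>) :: complex) * of_int (sign \<sigma>) * c) = (\<Sum>\<sigma>\<in>{\<sigma>. \<sigma> permutes {..<n}}. c)"
    by (intro sum.cong refl) (metis mult_1 of_int_1 of_int_mult sign_idempotent)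
  also have "\<dots> = of_nat (fact n) * c" by (simp add: card_permutations)
  finally show ?thesis .
qed

lemma fwedge_unitL:
  fixes K G :: "('n::finite) fock"
  assumes "homf 0 K" "altf G"
  shows "fwedge K G us = K [] * G us"
proof -
  have "fwedge K G us = complex_of_real (1 / fact (length us)) *
      (\<Sum>\<sigma>\<in>{\<sigma>. \<sigma> permutes {..<length us}}. of_int (sign \<sigma>) * of_int (sign \<sigma>) * (K [] * G us))"
    unfolding fwedge_homL[OF assms(1)] using assms(2) unfolding altf_def
    by (simp add: mult.commute mult.left_commute)
  also have "\<dots> = K [] * G us" unfolding sum_sign_sq by simp
  finally show ?thesis .
qed

lemma fwedge_unitR:
  fixes K F :: "('n::finite) fock"
  assumes "homf 0 K" "altf F"
  shows "fwedge F K us = F us * K []"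
proof -
  have "fwedge F K us = complex_of_real (1 / fact (length us)) *
      (\<Sum>\<sigma>\<in>{\<sigma>. \<sigma> permutes {..<length us}}. of_int (sign \<sigma>) * of_int (sign \<sigma>) * (K [] * F us))"
    unfolding fwedge_homR[OF assms(1)] using assms(2) unfolding altf_def
    by (simp add: mult.commute mult.left_commute)
  also have "\<dots> = F us * K []" unfolding sum_sign_sq by simp
  finally show ?thesis .
qed

lemma fwedge_linR:
  "fwedge F (\<lambda>ws. a * G1 ws + b * G2 ws) us = a * fwedge F G1 us + b * fwedge F G2 us"
  unfolding fwedge_eq
  by (simp add: algebra_simps sum.distrib sum_distrib_left)

lemma fwedge_linL:
  "fwedge (\<lambda>ws. a * F1 ws + b * F2 ws) G us = a * fwedge F1 G us + b * fwedge F2 G us"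
  unfolding fwedge_eq
  by (simp add: algebra_simps sum.distrib sum_distrib_left)

lemma fwedge_sumL:
  "fwedge (\<lambda>ws. \<Sum>i\<in>I. f i ws) G us = (\<Sum>i\<in>I. fwedge (f i) G us)"
  unfolding fwedge_eq
  by (simp add: sum_distrib_left sum_distrib_right sum.swap[of _ I] mult.assoc mult.left_commute)

lemma fwedge_zeroR: "fwedge F (\<lambda>ws. 0) us = 0"
  unfolding fwedge_eq by simp

lemma fwedge_zeroL: "fwedge (\<lambda>ws. 0) G us = 0"
  unfolding fwedge_eq by simp

lemma homf_fwedge:
  fixes F G :: "('n::finite) fock"
  assumes "homf k F" "homf l G" shows "homf (k + l) (fwedge F G)"
  unfolding homf_def
proof (intro allI impI)
  fix ws :: "(real^'n) list" assume "length ws \<noteq> k + l"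
  then show "fwedge F G ws = 0"
    unfolding fwedge_homL[OF assms(1)] using assms(2) unfolding homf_def by auto
qed

lemma homf_ann: "homf (Suc k) F \<Longrightarrow> homf k (\<lambda>ws. F (u # ws))"
  unfolding homf_def by simp

lemma homf_vec1: "homf 1 (vec1 J w)"
  unfolding homf_def vec1_def by simp

lemma altf_vec1: fixes w :: "real^('a::finite)" shows "altf (vec1 J w)"
  unfolding altf_def
proof (intro allI impI)
  fix ws :: "(real^'a) list" and \<sigma> assume s: "\<sigma> permutes {..<length ws}"
  show "vec1 J w (permute_list \<sigma> ws) = of_int (sign \<sigma>) * vec1 J w ws"
  proof (cases "length ws = 1")
    case True
    then have "\<sigma> permutes {0}" using s by (simp add: lessThan_Suc)
    then have "\<sigma> = id" by (metis permutes_sing)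
    then show ?thesis by simp
  qed (simp add: vec1_def)
qed

lemma homf_vacuum: "homf 0 vacuum"
  unfolding homf_def vacuum_def by simp

lemma altf_vacuum: "altf (vacuum :: ('a::finite) fock)"
  unfolding altf_def
proof (intro allI impI)
  fix ws :: "(real^'a) list" and \<sigma> assume s: "\<sigma> permutes {..<length ws}"
  show "vacuum (permute_list \<sigma> ws) = of_int (sign \<sigma>) * vacuum ws"
  proof (cases "ws = []")
    case True
    then have "\<sigma> = id" using s by (simp add: permutes_empty)
    then show ?thesis by simp
  next
    case False
    then have "permute_list \<sigma> ws \<noteq> []" by (metis length_0_conv length_permute_list)
    then show ?thesis using False by (simp add: vacuum_def)
  qed
qed


lemma coef_aux: "(a::real) \<noteq> 0 \<Longrightarrow> (1 / (a * b * c)) * a = 1 / (b * c)"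
  by simp

lemma coef1: "complex_of_real (1 / (fact (Suc k) * fact m)) * of_nat (Suc k) = complex_of_real (1 / (fact k * fact m))"
proof -
  have "(1 / (fact (Suc k) * fact m)) * real (Suc k) = 1 / (fact k * fact m)"
    unfolding fact_Suc of_nat_mult by (rule coef_aux) simp
  then show ?thesis by (metis of_real_mult of_real_of_nat_eq)
qed

lemma coef2: "complex_of_real (1 / (fact k * fact (Suc m))) * of_nat (Suc m) = complex_of_real (1 / (fact k * fact m))"
proof -
  have "(1 / (real (Suc m) * fact k * fact m)) * real (Suc m) = 1 / (fact k * fact m)"
    by (rule coef_aux) simp
  then have "(1 / (fact k * fact (Suc m))) * real (Suc m) = 1 / (fact k * fact m)"
    unfolding fact_Suc of_nat_mult by (simp add: mult_ac)
  then show ?thesis by (metis of_real_mult of_real_of_nat_eq)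
qed

lemma sum_if_lt:
  assumes "k \<le> N"
  shows "(\<Sum>b<N. if b < k then A else B) = of_nat k * A + of_nat (N - k) * (B :: complex)"
proof -
  have u: "{..<N} = {..<k} \<union> {k..<N}" using assms by auto
  have "(\<Sum>b<N. if b < k then A else B) = (\<Sum>b\<in>{..<k}. if b < k then A else B) + (\<Sum>b\<in>{k..<N}. if b < k then A else B)"
    unfolding u by (rule sum.union_disjoint) auto
  also have "(\<Sum>b\<in>{..<k}. if b < k then A else B) = (\<Sum>b\<in>{..<k}. A)" by (rule sum.cong) auto
  also have "(\<Sum>b\<in>{k..<N}. if b < k then A else B) = (\<Sum>b\<in>{k..<N}. B)" by (rule sum.cong) auto
  finally show ?thesis by simp
qed

lemma leibniz:
  fixes F G :: "('n::finite) fock"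
  assumes hF: "homf k F" and aF: "altf F" and aG: "altf G"
  shows "fwedge F G (u # us) = fwedge (\<lambda>ws. F (u # ws)) G us + (-1) ^ k * fwedge F (\<lambda>ws. G (u # ws)) us"
proof -
  let ?n = "length us"
  let ?P = "{q. q permutes {..<?n}}"
  define S1 where "S1 = (\<Sum>q\<in>?P. of_int (sign q) * F (u # take (k - 1) (permute_list q us)) * G (drop (k - 1) (permute_list q us)))"
  define S2 where "S2 = (\<Sum>q\<in>?P. of_int (sign q) * F (take k (permute_list q us)) * G (u # drop k (permute_list q us)))"
  define S where "S = (\<Sum>\<sigma>\<in>{\<sigma>. \<sigma> permutes {..<Suc ?n}}. of_int (sign \<sigma>) * F (take k (permute_list \<sigma> (u # us))) * G (drop k (permute_list \<sigma> (u # us))))"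
  show ?thesis
  proof (cases "k \<le> Suc ?n")
    case False
    have l: "fwedge F G (u # us) = 0" using False unfolding fwedge_homL[OF hF] by simp
    have r1: "fwedge (\<lambda>ws. F (u # ws)) G us = 0"
    proof (cases k)
      case 0 then have "(\<lambda>ws. F (u # ws)) = (\<lambda>ws. 0)" using hF by (simp add: homf_def)
      then show ?thesis by (simp add: fwedge_zeroL)
    next
      case (Suc k')
      have h': "homf k' (\<lambda>ws. F (u # ws))" using hF Suc by (simp add: homf_ann)
      show ?thesis using False Suc unfolding fwedge_homL[OF h'] by simp
    qed
    have r2: "fwedge F (\<lambda>ws. G (u # ws)) us = 0" using False unfolding fwedge_homL[OF hF] by simp
    show ?thesis using l r1 r2 by simp
  next
    case True
    have trm: "of_int (sign (shp q \<circ> insp b)) * F (take k (permute_list (shp q \<circ> insp b) (u # us))) * G (drop k (permute_list (shp q \<circ> insp b) (u # us)))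
      = (if b < k then of_int (sign q) * F (u # take (k - 1) (permute_list q us)) * G (drop (k - 1) (permute_list q us))
         else (-1) ^ k * (of_int (sign q) * F (take k (permute_list q us)) * G (u # drop k (permute_list q us))))"
      if q: "q \<in> ?P" and b: "b < Suc ?n" for q b
    proof -
      let ?Q = "permute_list q us"
      have lQ: "length ?Q = ?n" by simp
      have pl: "permute_list (shp q \<circ> insp b) (u # us) = take b ?Q @ u # drop b ?Q"
        using q b by (intro permute_list_decomp) auto
      have sg: "of_int (sign (shp q \<circ> insp b)) = (of_int (sign q) :: complex) * (-1) ^ b"
        using q by (simp add: sign_decomp)
      show ?thesis
      proof (cases "b < k")
        case True
        have t1: "take k (take b ?Q @ u # drop b ?Q) = take b (take (k - 1) ?Q) @ u # drop b (take (k - 1) ?Q)"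
        proof -
          have lb: "length (take b ?Q) = b" using b by simp
          have kb: "k - b = Suc (k - 1 - b)" using True by simp
          have "take k (take b ?Q @ u # drop b ?Q) = take b ?Q @ take (k - b) (u # drop b ?Q)"
            using lb True by (simp add: take_append)
          also have "\<dots> = take b ?Q @ u # take (k - 1 - b) (drop b ?Q)" unfolding kb by simp
          moreover have bk: "b \<le> k - 1" using True by simp
          ultimately show ?thesis by (simp add: drop_take min_absorb1)
        qed
        have t2: "drop k (take b ?Q @ u # drop b ?Q) = drop (k - 1) ?Q"
        proof -
          have kb: "k - b = Suc (k - 1 - b)" using True by simp
          have "drop k (take b ?Q @ u # drop b ?Q) = drop (k - b) (u # drop b ?Q)"
            using b True by (simp add: drop_append)
          also have "\<dots> = drop (k - 1) ?Q" unfolding kb using True by simp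
          finally show ?thesis .
        qed
        have mv: "F (take b (take (k - 1) ?Q) @ u # drop b (take (k - 1) ?Q)) = (-1) ^ b * F (u # take (k - 1) ?Q)"
          using True b by (intro altf_move[OF aF]) auto
        have "((-1) ^ b * (-1) ^ b :: complex) = 1" by (simp flip: power_add)
        then show ?thesis using True unfolding pl sg t1 t2 mv
          by (simp add: algebra_simps)
      next
        case False
        have t1: "take k (take b ?Q @ u # drop b ?Q) = take k ?Q"
          using False b by (simp add: min_def)
        have t2: "drop k (take b ?Q @ u # drop b ?Q) = take (b - k) (drop k ?Q) @ u # drop (b - k) (drop k ?Q)"
          using False b by (simp add: drop_take)
        have mv: "G (take (b - k) (drop k ?Q) @ u # drop (b - k) (drop k ?Q)) = (-1) ^ (b - k) * G (u # drop k ?Q)"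
          using False b by (intro altf_move[OF aG]) auto
        have "((-1) ^ b * (-1) ^ (b - k) :: complex) = (-1) ^ k"
        proof -
          have "b = k + (b - k)" using False by simp
          then have "((-1) ^ b :: complex) = (-1) ^ k * (-1) ^ (b - k)" by (metis power_add)
          moreover have "((-1) ^ (b - k) * (-1) ^ (b - k) :: complex) = 1" by (simp flip: power_add)
          ultimately show ?thesis by (simp add: mult.assoc)
        qed
        then show ?thesis using False unfolding pl sg t1 t2 mv
          by (simp add: algebra_simps)
      qed
    qed
    have "S = (\<Sum>b<Suc ?n. \<Sum>q\<in>?P. of_int (sign (shp q \<circ> insp b)) * F (take k (permute_list (shp q \<circ> insp b) (u # us))) * G (drop k (permute_list (shp q \<circ> insp b) (u # us))))"
      unfolding S_def by (rule sum_perms_decomp)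
    also have "\<dots> = (\<Sum>b<Suc ?n. if b < k then S1 else (-1) ^ k * S2)"
      unfolding S1_def S2_def sum_distrib_left
      by (intro sum.cong refl) (simp add: trm)
    also have "\<dots> = of_nat k * S1 + of_nat (Suc ?n - k) * ((-1) ^ k * S2)"
      using True by (rule sum_if_lt)
    finally have SS: "S = of_nat k * S1 + of_nat (Suc ?n - k) * ((-1) ^ k * S2)" .
    have l: "fwedge F G (u # us) = complex_of_real (1 / (fact k * fact (Suc ?n - k))) * S"
      using True unfolding fwedge_homL[OF hF] S_def by simp
    show ?thesis
    proof (cases k)
      case 0
      have "(\<lambda>ws. F (u # ws)) = (\<lambda>ws. 0)" using hF 0 by (simp add: homf_def)
      then have r1: "fwedge (\<lambda>ws. F (u # ws)) G us = 0" by (simp add: fwedge_zeroL)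
      have r2: "fwedge F (\<lambda>ws. G (u # ws)) us = complex_of_real (1 / (fact 0 * fact ?n)) * S2"
        unfolding fwedge_homL[OF hF] S2_def using 0 by simp
      have "complex_of_real (1 / (fact k * fact (Suc ?n - k))) * S
          = (complex_of_real (1 / (fact 0 * fact (Suc ?n))) * of_nat (Suc ?n)) * S2"
        unfolding SS using 0 by (simp del: of_nat_Suc fact_Suc)
      then show ?thesis unfolding l r1 r2 coef2 using 0 by simp
    next
      case (Suc k')
      have r1: "fwedge (\<lambda>ws. F (u # ws)) G us = complex_of_real (1 / (fact k' * fact (?n - k'))) * S1"
        using Suc True unfolding fwedge_homL[OF homf_ann[OF hF[unfolded Suc]]] S1_def by simp
      have e1: "complex_of_real (1 / (fact k * fact (Suc ?n - k))) * of_nat k = complex_of_real (1 / (fact k' * fact (?n - k')))"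
        using coef1[of k' "?n - k'"] Suc by simp
      show ?thesis
      proof (cases "k \<le> ?n")
        case True
        have r2: "fwedge F (\<lambda>ws. G (u # ws)) us = complex_of_real (1 / (fact k * fact (?n - k))) * S2"
          unfolding fwedge_homL[OF hF] S2_def using True by simp
        have e2: "complex_of_real (1 / (fact k * fact (Suc ?n - k))) * of_nat (Suc ?n - k) = complex_of_real (1 / (fact k * fact (?n - k)))"
          using coef2[of k "?n - k"] True by (simp add: Suc_diff_le)
        have "complex_of_real (1 / (fact k * fact (Suc ?n - k))) * S
          = (complex_of_real (1 / (fact k * fact (Suc ?n - k))) * of_nat k) * S1
            + (-1) ^ k * ((complex_of_real (1 / (fact k * fact (Suc ?n - k))) * of_nat (Suc ?n - k)) * S2)"
          unfolding SS by (simp add: algebra_simps)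
        then show ?thesis unfolding l r1 r2 e1 e2 by simp
      next
        case False
        then have kk: "k = Suc ?n" using \<open>k \<le> Suc ?n\<close> by simp
        have r2: "fwedge F (\<lambda>ws. G (u # ws)) us = 0"
          unfolding fwedge_homL[OF hF] using False by simp
        have "complex_of_real (1 / (fact k * fact (Suc ?n - k))) * S
          = (complex_of_real (1 / (fact k * fact (Suc ?n - k))) * of_nat k) * S1"
          unfolding SS using kk by (simp add: algebra_simps)
        then show ?thesis unfolding l r1 r2 e1 by simp
      qed
    qed
  qed
qed


lemma fwedge_smultR: "fwedge F (\<lambda>ws. c * G ws) us = c * fwedge F G us"
  using fwedge_linR[of F c G 0 G us] by simp

lemma leib1:
  fixes X G :: "('n::finite) fock"
  assumes "homf 1 X" "altf X" "altf G"
  shows "fwedge X G (u # us) = X [u] * G us - fwedge X (\<lambda>ws. G (u # ws)) us"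
proof -
  have h0: "homf 0 (\<lambda>ws. X (u # ws))" using assms(1) homf_ann[of 0 X u] by simp
  show ?thesis using leibniz[OF assms(1,2,3), of u us] fwedge_unitL[OF h0 assms(3)] by simp
qed

lemma leib1_fun:
  fixes X G :: "('n::finite) fock"
  assumes "homf 1 X" "altf X" "altf G"
  shows "(\<lambda>ws. fwedge X G (u # ws)) = (\<lambda>ws. X [u] * G ws + (-1) * fwedge X (\<lambda>ws. G (u # ws)) ws)"
  using leib1[OF assms] by (simp add: fun_eq_iff)

lemma fwedge_Nil_hom: assumes "homf (Suc k) (F :: ('n::finite) fock)" shows "fwedge F G [] = 0"
  by (simp add: fwedge_homL[OF assms])

lemma anticomm:
  fixes X Y :: "('n::finite) fock"
  assumes X: "homf 1 X" "altf X" and Y: "homf 1 Y" "altf Y"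
  shows "altf G \<Longrightarrow> fwedge X (fwedge Y G) us = - fwedge Y (fwedge X G) us"
proof (induction us arbitrary: G)
  case Nil
  then show ?case using fwedge_Nil_hom[of 0 X] fwedge_Nil_hom[of 0 Y] X Y by simp
next
  case (Cons u us)
  have aG: "altf (\<lambda>ws. G (u # ws))" using Cons.prems by (rule altf_ann)
  have "fwedge X (fwedge Y G) (u # us) = X [u] * fwedge Y G us - fwedge X (\<lambda>ws. fwedge Y G (u # ws)) us"
    by (rule leib1[OF X fwedge_alt])
  also have "fwedge X (\<lambda>ws. fwedge Y G (u # ws)) us = Y [u] * fwedge X G us + (-1) * fwedge X (fwedge Y (\<lambda>ws. G (u # ws))) us"
    unfolding leib1_fun[OF Y Cons.prems] by (rule fwedge_linR)
  finally have l: "fwedge X (fwedge Y G) (u # us) = X [u] * fwedge Y G us - (Y [u] * fwedge X G us + (-1) * fwedge X (fwedge Y (\<lambda>ws. G (u # ws))) us)" .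
  have "fwedge Y (fwedge X G) (u # us) = Y [u] * fwedge X G us - fwedge Y (\<lambda>ws. fwedge X G (u # ws)) us"
    by (rule leib1[OF Y fwedge_alt])
  also have "fwedge Y (\<lambda>ws. fwedge X G (u # ws)) us = X [u] * fwedge Y G us + (-1) * fwedge Y (fwedge X (\<lambda>ws. G (u # ws))) us"
    unfolding leib1_fun[OF X Cons.prems] by (rule fwedge_linR)
  finally have r: "fwedge Y (fwedge X G) (u # us) = Y [u] * fwedge X G us - (X [u] * fwedge Y G us + (-1) * fwedge Y (fwedge X (\<lambda>ws. G (u # ws))) us)" .
  show ?case unfolding l r using Cons.IH[OF aG] by (simp add: algebra_simps)
qed

lemma Hcomm:
  fixes H X :: "('n::finite) fock" and Yf :: "real^'n \<Rightarrow> ('n::finite) fock"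
  assumes H: "homf 2 H" "altf H" and Hann: "\<And>u. (\<lambda>ws. H (u # ws)) = Yf u"
    and Yh: "\<And>u. homf 1 (Yf u)" and Ya: "\<And>u. altf (Yf u)"
    and X: "homf 1 X" "altf X"
  shows "altf G \<Longrightarrow> fwedge H (fwedge X G) us = fwedge X (fwedge H G) us"
proof (induction us arbitrary: G)
  case Nil
  then show ?case using fwedge_Nil_hom[of 1 H] fwedge_Nil_hom[of 0 X] X H by (simp add: numeral_2_eq_2)
next
  case (Cons u us)
  have aG: "altf (\<lambda>ws. G (u # ws))" using Cons.prems by (rule altf_ann)
  have lb: "fwedge H K (u # vs) = fwedge (Yf u) K vs + fwedge H (\<lambda>ws. K (u # ws)) vs" if "altf K" for K vs
    using leibniz[OF H(1,2) that, where u=u and us=vs] Hann[of u] by simp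
  have lbf: "(\<lambda>ws. fwedge H K (u # ws)) = (\<lambda>ws. 1 * fwedge (Yf u) K ws + 1 * fwedge H (\<lambda>ws. K (u # ws)) ws)" if "altf K" for K
    using lb[OF that] by (simp add: fun_eq_iff)
  have "fwedge H (fwedge X G) (u # us) = fwedge (Yf u) (fwedge X G) us + fwedge H (\<lambda>ws. fwedge X G (u # ws)) us"
    by (rule lb[OF fwedge_alt])
  also have "fwedge H (\<lambda>ws. fwedge X G (u # ws)) us = X [u] * fwedge H G us + (-1) * fwedge H (fwedge X (\<lambda>ws. G (u # ws))) us"
    unfolding leib1_fun[OF X Cons.prems] by (rule fwedge_linR)
  also have "fwedge (Yf u) (fwedge X G) us = - fwedge X (fwedge (Yf u) G) us"
    by (rule anticomm[OF Yh Ya X Cons.prems])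
  finally have l: "fwedge H (fwedge X G) (u # us) = - fwedge X (fwedge (Yf u) G) us + (X [u] * fwedge H G us + (-1) * fwedge H (fwedge X (\<lambda>ws. G (u # ws))) us)" .
  have "fwedge X (fwedge H G) (u # us) = X [u] * fwedge H G us - fwedge X (\<lambda>ws. fwedge H G (u # ws)) us"
    by (rule leib1[OF X fwedge_alt])
  also have "fwedge X (\<lambda>ws. fwedge H G (u # ws)) us = 1 * fwedge X (fwedge (Yf u) G) us + 1 * fwedge X (fwedge H (\<lambda>ws. G (u # ws))) us"
    unfolding lbf[OF Cons.prems] by (rule fwedge_linR)
  finally have r: "fwedge X (fwedge H G) (u # us) = X [u] * fwedge H G us - (1 * fwedge X (fwedge (Yf u) G) us + 1 * fwedge X (fwedge H (\<lambda>ws. G (u # ws))) us)" .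
  show ?case unfolding l r using Cons.IH[OF aG] by (simp add: algebra_simps)
qed

lemma altf_pow: "altf H \<Longrightarrow> altf (fwedge_pow (H :: ('n::finite) fock) r)"
  by (cases r) (simp_all add: altf_vacuum fwedge_alt)

lemma homf_pow: "homf 2 H \<Longrightarrow> homf (2 * r) (fwedge_pow (H :: ('n::finite) fock) r)"
proof (induction r)
  case 0 then show ?case by (simp add: homf_vacuum)
next
  case (Suc r)
  then show ?case using homf_fwedge[of 2 H "2 * r" "fwedge_pow H r"] by simp
qed

lemma pow_ann:
  fixes H :: "('n::finite) fock" and Yf :: "real^'n \<Rightarrow> ('n::finite) fock"
  assumes H: "homf 2 H" "altf H" and Hann: "\<And>u. (\<lambda>ws. H (u # ws)) = Yf u"
    and Yh: "\<And>u. homf 1 (Yf u)" and Ya: "\<And>u. altf (Yf u)"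
  shows "fwedge_pow H (Suc r) (u # us) = of_nat (Suc r) * fwedge (Yf u) (fwedge_pow H r) us"
proof (induction r arbitrary: u us)
  case 0
  have "(\<lambda>ws. vacuum (u # ws)) = (\<lambda>ws. 0)" by (simp add: fun_eq_iff vacuum_def)
  then show ?case using leibniz[OF H(1,2) altf_vacuum, where u=u and us=us] Hann[of u] by (simp add: fwedge_zeroR)
next
  case (Suc r)
  have "fwedge_pow H (Suc (Suc r)) (u # us) = fwedge (Yf u) (fwedge_pow H (Suc r)) us + fwedge H (\<lambda>ws. fwedge_pow H (Suc r) (u # ws)) us"
    using leibniz[OF H(1,2) altf_pow[OF H(2), of "Suc r"], where u=u and us=us] Hann[of u] by simp
  also have "(\<lambda>ws. fwedge_pow H (Suc r) (u # ws)) = (\<lambda>ws. of_nat (Suc r) * fwedge (Yf u) (fwedge_pow H r) ws)"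
    using Suc.IH by (simp add: fun_eq_iff)
  also have "fwedge H (\<lambda>ws. of_nat (Suc r) * fwedge (Yf u) (fwedge_pow H r) ws) us = of_nat (Suc r) * fwedge (Yf u) (fwedge H (fwedge_pow H r)) us"
    unfolding fwedge_smultR using Hcomm[OF H Hann Yh Ya Yh Ya altf_pow[OF H(2)]] by simp
  finally show ?case by (simp add: algebra_simps)
qed

lemma fam_dep:
  fixes v :: "nat \<Rightarrow> real^'n"
  assumes "CARD('n) < N"
  shows "\<exists>c. (\<exists>i<N. c i \<noteq> 0) \<and> (\<Sum>i<N. c i *\<^sub>R v i) = 0"
proof (cases "inj_on v {..<N}")
  case False
  then obtain i j where ij: "i < N" "j < N" "i \<noteq> j" "v i = v j" unfolding inj_on_def by auto
  define c where "c l = (if l = i then 1 else 0) - (if l = j then 1 else (0::real))" for l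
  have t: "c l *\<^sub>R v l = (if l = i then v l else 0) - (if l = j then v l else 0)" for l
    by (simp add: c_def scaleR_left_diff_distrib)
  have "(\<Sum>l<N. c l *\<^sub>R v l) = (\<Sum>l<N. (if l = i then v l else 0)) - (\<Sum>l<N. (if l = j then v l else 0))"
    unfolding t by (rule sum_subtractf)
  also have "\<dots> = 0" using ij by simp
  finally show ?thesis using ij by (intro exI[of _ c]) (auto simp: c_def)
next
  case True
  let ?S = "v ` {..<N}"
  have cS: "card ?S = N" using card_image[OF True] by simp
  have "\<not> independent ?S"
  proof
    assume "independent ?S"
    then have "card ?S \<le> DIM(real^'n)" using independent_bound by blast
    then show False using cS assms by simp
  qed
  then obtain u where u: "\<exists>x\<in>?S. u x \<noteq> 0" "(\<Sum>x\<in>?S. u x *\<^sub>R x) = 0"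
    using dependent_finite[of ?S] by blast
  have "(\<Sum>i<N. u (v i) *\<^sub>R v i) = (\<Sum>x\<in>?S. u x *\<^sub>R x)"
    using sum.reindex[OF True, of "\<lambda>x. u x *\<^sub>R x"] by simp
  then show ?thesis using u by (intro exI[of _ "\<lambda>i. u (v i)"]) auto
qed

lemma F_sum_first:
  assumes add: "\<And>a b ws. F ((a + b) # ws) = F (a # ws) + F (b # ws)"
    and z: "\<And>ws. F (0 # ws) = 0"
  shows "finite S \<Longrightarrow> F ((\<Sum>j\<in>S. x j) # ws) = (\<Sum>j\<in>S. F (x j # ws))"
  by (induction S rule: finite_induct) (simp_all add: z add)

lemma vanish:
  fixes F :: "('n::finite) fock" and J :: "real^'n \<Rightarrow> real^'n"
  assumes card: "CARD('n) = 2 * m" and J: "is_complex_structure J" and aF: "altf F"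
    and add: "\<And>a b ws. F ((a + b) # ws) = F (a # ws) + F (b # ws)"
    and scal: "\<And>c a ws. F ((c *\<^sub>R a) # ws) = complex_of_real c * F (a # ws)"
    and jl: "\<And>a ws. F (J a # ws) = - \<i> * F (a # ws)"
    and len: "m < length ws"
  shows "F ws = 0"
proof -
  let ?L = "length ws"
  define v where "v i = (if i < ?L then ws ! i else J (ws ! (i - ?L)))" for i
  obtain c where c: "\<exists>i<2 * ?L. c i \<noteq> 0" "(\<Sum>i<2 * ?L. c i *\<^sub>R v i) = 0"
    using fam_dep[of "2 * ?L" v] card len by auto
  define a where "a j = c j" for j
  define b where "b j = c (?L + j)" for j
  have split: "(\<Sum>i<2 * ?L. c i *\<^sub>R v i) = (\<Sum>j<?L. a j *\<^sub>R ws ! j + b j *\<^sub>R J (ws ! j))"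
  proof -
    have u: "{..<2 * ?L} = {..<?L} \<union> {?L..<2 * ?L}" by auto
    have "(\<Sum>i<2 * ?L. c i *\<^sub>R v i) = (\<Sum>i<?L. c i *\<^sub>R v i) + (\<Sum>i\<in>{?L..<2 * ?L}. c i *\<^sub>R v i)"
      unfolding u by (rule sum.union_disjoint) auto
    also have "(\<Sum>i\<in>{?L..<2 * ?L}. c i *\<^sub>R v i) = (\<Sum>j<?L. c (?L + j) *\<^sub>R v (?L + j))"
    proof -
      have "x \<in> (\<lambda>j. ?L + j) ` {..<?L}" if "?L \<le> x" "x < 2 * ?L" for x
        using that by (intro image_eqI[of _ _ "x - ?L"]) auto
      then have "{?L..<2 * ?L} = (\<lambda>j. ?L + j) ` {..<?L}" by auto
      then show ?thesis by (simp add: sum.reindex)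
    qed
    also have "(\<Sum>i<?L. c i *\<^sub>R v i) = (\<Sum>j<?L. a j *\<^sub>R ws ! j)" by (simp add: v_def a_def)
    also have "(\<Sum>j<?L. c (?L + j) *\<^sub>R v (?L + j)) = (\<Sum>j<?L. b j *\<^sub>R J (ws ! j))" by (simp add: v_def b_def)
    finally show ?thesis by (simp add: sum.distrib)
  qed
  obtain k where k: "k < ?L" "a k \<noteq> 0 \<or> b k \<noteq> 0"
  proof -
    obtain i where i: "i < 2 * ?L" "c i \<noteq> 0" using c(1) by blast
    show ?thesis
    proof (cases "i < ?L")
      case True then show ?thesis using i by (intro that[of i]) (auto simp: a_def)
    next
      case False then show ?thesis using i by (intro that[of "i - ?L"]) (auto simp: b_def)
    qed
  qed
  define rest where "rest = take k ws @ drop (Suc k) ws"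
  have z: "F (0 # vs) = 0" for vs using scal[of 0 0 vs] by simp
  have one: "F ((a j *\<^sub>R ws ! j + b j *\<^sub>R J (ws ! j)) # rest) = complex_of_real (a j) * F (ws ! j # rest) - \<i> * complex_of_real (b j) * F (ws ! j # rest)" for j
    using add scal jl by simp
  have oth: "F (ws ! j # rest) = 0" if "j < ?L" "j \<noteq> k" for j
  proof (rule altf_rep[OF aF])
    show "ws ! j \<in> set rest"
    proof (cases "j < k")
      case True then show ?thesis using that k unfolding rest_def by (auto simp: in_set_conv_nth nth_append intro!: exI[of _ j])
    next
      case False
      then have "ws ! j = drop (Suc k) ws ! (j - Suc k)" using that by simp
      moreover have "j - Suc k < length (drop (Suc k) ws)" using that False by simp
      ultimately show ?thesis unfolding rest_def by (metis Un_iff nth_mem set_append)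
    qed
  qed
  have "0 = F (0 # rest)" using z by simp
  also have "\<dots> = F ((\<Sum>j<?L. a j *\<^sub>R ws ! j + b j *\<^sub>R J (ws ! j)) # rest)" using c(2) split by simp
  also have "\<dots> = (\<Sum>j<?L. F ((a j *\<^sub>R ws ! j + b j *\<^sub>R J (ws ! j)) # rest))"
    by (rule F_sum_first[OF add z]) simp
  also have "\<dots> = F ((a k *\<^sub>R ws ! k + b k *\<^sub>R J (ws ! k)) # rest)"
  proof -
    let ?f = "\<lambda>j. F ((a j *\<^sub>R ws ! j + b j *\<^sub>R J (ws ! j)) # rest)"
    have "(\<Sum>j<?L. ?f j) = ?f k + (\<Sum>j\<in>{..<?L} - {k}. ?f j)" using k(1) by (intro sum.remove) auto
    also have "(\<Sum>j\<in>{..<?L} - {k}. ?f j) = 0" by (intro sum.neutral) (auto simp: one oth)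
    finally show ?thesis by simp
  qed
  also have "\<dots> = Complex (a k) (- b k) * F (ws ! k # rest)"
    unfolding one by (simp add: complex_eq_iff algebra_simps)
  finally have "Complex (a k) (- b k) * F (ws ! k # rest) = 0" by simp
  moreover have "Complex (a k) (- b k) \<noteq> 0" using k(2) by (simp add: complex_eq_iff)
  ultimately have "F (ws ! k # rest) = 0" by simp
  moreover have "ws = take k rest @ ws ! k # drop k rest"
    using k(1) unfolding rest_def by (simp add: id_take_nth_drop[symmetric] min_def)
  moreover have "F (take k rest @ ws ! k # drop k rest) = (-1) ^ k * F (ws ! k # rest)"
    using k(1) unfolding rest_def by (intro altf_move[OF aF]) simp
  ultimately show ?thesis by simp
qed

locale cstr =
  fixes J :: "real^('n::finite) \<Rightarrow> real^'n"
  assumes cs: "is_complex_structure J"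
begin

lemma Jlin: "linear J" using cs by (simp add: is_complex_structure_def)
lemma JJ[simp]: "J (J v) = - v" using cs by (simp add: is_complex_structure_def)
lemma Jin: "J u \<bullet> J v = u \<bullet> v" using cs by (simp add: is_complex_structure_def)
lemma Jsw: "J x \<bullet> y = - (x \<bullet> J y)"
proof -
  have "J x \<bullet> y = J (J x) \<bullet> J y" by (rule Jin[symmetric])
  then show ?thesis by simp
qed
lemma J_add[simp]: "J (a + b) = J a + J b" using Jlin by (rule linear_add)
lemma J_scale[simp]: "J (c *\<^sub>R a) = c *\<^sub>R J a" using Jlin by (rule linear_cmul)
lemma J_neg[simp]: "J (- a) = - J a" using Jlin by (rule linear_neg)
lemma J_diff[simp]: "J (a - b) = J a - J b" using Jlin by (rule linear_diff)
lemma J_0[simp]: "J 0 = 0" using Jlin by (rule linear_0)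

lemma hip_add2: "hip J u (v + w) = hip J u v + hip J u w"
  by (simp add: hip_def complex_eq_iff inner_add_right)
lemma hip_scale2: "hip J u (c *\<^sub>R v) = complex_of_real c * hip J u v"
  by (simp add: hip_def complex_eq_iff)
lemma hip_J2: "hip J u (J v) = \<i> * hip J u v"
  by (simp add: hip_def complex_eq_iff Jin Jsw inner_commute[of u "J v"])
lemma hip_neg2: "hip J u (- v) = - hip J u v"
  by (simp add: hip_def complex_eq_iff)
lemma hip_cmul2: "hip J u (cmul J c v) = c * hip J u v"
  by (simp add: cmul_def hip_add2 hip_scale2 hip_J2 complex_eq_iff)
lemma hip_sum2: "hip J u (\<Sum>i\<in>S. f i) = (\<Sum>i\<in>S. hip J u (f i))"
proof (induction S rule: infinite_finite_induct)
  case (insert x F)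
  then show ?case by (simp add: hip_add2)
qed (simp_all add: hip_def zero_complex.code)
lemma hip_conj: "hip J v u = cnj (hip J u v)"
proof -
  have "u \<bullet> J v = - (v \<bullet> J u)" using Jsw[of v u] by (simp add: inner_commute)
  then show ?thesis by (simp add: hip_def complex_eq_iff inner_commute)
qed

lemma cmul_add: "cmul J c (a + b) = cmul J c a + cmul J c b"
  by (simp add: cmul_def algebra_simps)
lemma cmul_sum: "cmul J c (\<Sum>i\<in>S. f i) = (\<Sum>i\<in>S. cmul J c (f i))"
proof (induction S rule: infinite_finite_induct)
  case (insert x F)
  then show ?case by (simp add: cmul_add)
qed (simp_all add: cmul_def)

lemma vec1_add: "vec1 J (a + b) us = vec1 J a us + vec1 J b us"
  by (simp add: vec1_def hip_add2)
lemma vec1_scale: "vec1 J (c *\<^sub>R a) us = complex_of_real c * vec1 J a us"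
  by (simp add: vec1_def hip_scale2)
lemma vec1_J: "vec1 J (J a) us = \<i> * vec1 J a us"
  by (simp add: vec1_def hip_J2)
lemma vec1_neg: "vec1 J (- a) us = - vec1 J a us"
  by (simp add: vec1_def hip_neg2)


lemma basis_coef:
  assumes B: "orthonormal_cbasis J m e"
  shows "v = (\<Sum>i<m. cmul J (hip J (e i) v) (e i))"
proof -
  obtain c where c: "v = (\<Sum>i<m. cmul J (c i) (e i))" using B unfolding orthonormal_cbasis_def by blast
  have "hip J (e k) v = c k" if k: "k < m" for k
  proof -
    have "hip J (e k) v = (\<Sum>i<m. c i * hip J (e k) (e i))" unfolding c hip_sum2 hip_cmul2 ..
    also have "\<dots> = (\<Sum>i<m. if i = k then c i else 0)"
      using B k unfolding orthonormal_cbasis_def by (intro sum.cong) auto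
    also have "\<dots> = c k" using k by simp
    finally show ?thesis .
  qed
  then have "(\<Sum>i<m. cmul J (hip J (e i) v) (e i)) = (\<Sum>i<m. cmul J (c i) (e i))" by simp
  then show ?thesis using c by simp
qed

lemma parseval:
  assumes B: "orthonormal_cbasis J m e"
  shows "hip J u z = (\<Sum>i<m. hip J u (e i) * hip J (e i) z)"
proof -
  have "hip J u z = hip J u (\<Sum>i<m. cmul J (hip J (e i) z) (e i))" using basis_coef[OF B, of z] by simp
  also have "\<dots> = (\<Sum>i<m. hip J u (e i) * hip J (e i) z)" unfolding hip_sum2 hip_cmul2 by (simp add: mult.commute)
  finally show ?thesis .
qed

end

locale tgl = cstr J for J :: "real^('n::finite) \<Rightarrow> real^'n" +
  fixes g :: "real^'n \<Rightarrow> real^'n"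
  assumes gS: "g \<in> SO_star J"
begin

lemma g_orth: "orthogonal_transformation g" using gS by (simp add: SO_star_def SO_space_def)
lemma g_lin: "linear g" using g_orth by (simp add: orthogonal_transformation_def)
lemma g_in: "g v \<bullet> g w = v \<bullet> w" using g_orth by (simp add: orthogonal_transformation_def)
lemma g_add[simp]: "g (a + b) = g a + g b" using g_lin by (rule linear_add)
lemma g_scale[simp]: "g (c *\<^sub>R a) = c *\<^sub>R g a" using g_lin by (rule linear_cmul)
lemma g_neg[simp]: "g (- a) = - g a" using g_lin by (rule linear_neg)
lemma g_inj: "inj g" using g_orth by (rule orthogonal_transformation_inj)
lemma P_bij: "bij (pg J g)" using gS by (simp add: SO_star_def)

lemma P_add: "pg J g (a + b) = pg J g a + pg J g b" by (simp add: pg_def algebra_simps)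
lemma P_scale: "pg J g (c *\<^sub>R a) = c *\<^sub>R pg J g a" by (simp add: pg_def algebra_simps)
lemma Q_add: "qg J g (a + b) = qg J g a + qg J g b" by (simp add: qg_def algebra_simps)
lemma Q_scale: "qg J g (c *\<^sub>R a) = c *\<^sub>R qg J g a" by (simp add: qg_def algebra_simps)
lemma P_J: "pg J g (J v) = J (pg J g v)" by (simp add: pg_def algebra_simps)
lemma Q_J: "qg J g (J v) = - J (qg J g v)" by (simp add: qg_def algebra_simps)

lemma Pi_P: "inv (pg J g) (pg J g x) = x" using P_bij bij_is_inj inv_f_f by metis
lemma P_Pi: "pg J g (inv (pg J g) y) = y" using P_bij bij_is_surj surj_f_inv_f by metis

lemma Pi_add: "inv (pg J g) (a + b) = inv (pg J g) a + inv (pg J g) b"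
proof -
  have "a + b = pg J g (inv (pg J g) a + inv (pg J g) b)" by (simp add: P_add P_Pi)
  then show ?thesis by (metis Pi_P)
qed
lemma Pi_scale: "inv (pg J g) (c *\<^sub>R a) = c *\<^sub>R inv (pg J g) a"
proof -
  have "c *\<^sub>R a = pg J g (c *\<^sub>R inv (pg J g) a)" by (simp add: P_scale P_Pi)
  then show ?thesis by (metis Pi_P)
qed
lemma Pi_J: "inv (pg J g) (J a) = J (inv (pg J g) a)"
proof -
  have "J a = pg J g (J (inv (pg J g) a))" by (simp add: P_J P_Pi)
  then show ?thesis by (metis Pi_P)
qed

lemma T_eq: "Tg J g x = qg J g (inv (pg J g) x)" by (simp add: Tg_def)
lemma T_add: "Tg J g (a + b) = Tg J g a + Tg J g b" by (simp add: T_eq Pi_add Q_add)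
lemma T_scale: "Tg J g (c *\<^sub>R a) = c *\<^sub>R Tg J g a" by (simp add: T_eq Pi_scale Q_scale)
lemma T_lin: "linear (Tg J g)" by (simp add: linear_iff T_add T_scale)
lemma T_neg: "Tg J g (- a) = - Tg J g a" using T_lin by (rule linear_neg)
lemma T_J: "Tg J g (J a) = - J (Tg J g a)" by (simp add: T_eq Pi_J Q_J)
lemma T_P: "Tg J g (pg J g v) = qg J g v" by (simp add: T_eq Pi_P)
lemma T_sum: "Tg J g (\<Sum>i\<in>S. f i) = (\<Sum>i\<in>S. Tg J g (f i))" using T_lin by (rule linear_sum)

lemma PQ_skew: "qg J g a \<bullet> pg J g b = - (pg J g a \<bullet> qg J g b)"
  by (simp add: pg_def qg_def inner_diff_left inner_diff_right inner_add_left inner_add_right Jin g_in algebra_simps)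

lemma T_skew: "Tg J g x \<bullet> y = - (x \<bullet> Tg J g y)"
proof -
  have "Tg J g x \<bullet> y = qg J g (inv (pg J g) x) \<bullet> pg J g (inv (pg J g) y)" by (simp add: T_eq P_Pi)
  also have "\<dots> = - (pg J g (inv (pg J g) x) \<bullet> qg J g (inv (pg J g) y))" by (rule PQ_skew)
  finally show ?thesis by (simp add: T_eq P_Pi)
qed

lemma hip_skew: "hip J u (Tg J g x) = - hip J x (Tg J g u)"
proof -
  have 1: "u \<bullet> Tg J g x = - (x \<bullet> Tg J g u)" using T_skew[of x u] by (simp add: inner_commute)
  have "J u \<bullet> Tg J g x = - (x \<bullet> Tg J g (J u))" using T_skew[of x "J u"] by (simp add: inner_commute)
  also have "\<dots> = x \<bullet> J (Tg J g u)" by (simp add: T_J)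
  also have "\<dots> = - (J x \<bullet> Tg J g u)" using Jsw[of x "Tg J g u"] by simp
  finally show ?thesis using 1 by (simp add: hip_def complex_eq_iff)
qed

lemma T_cmul: "Tg J g (cmul J c v) = cmul J (cnj c) (Tg J g v)"
  by (simp add: cmul_def T_add T_scale T_J)

end

lemma fwedge_smultL: "fwedge (\<lambda>ws. c * F ws) G us = c * fwedge F G us"
  using fwedge_linL[of c F 0 F G us] by simp

lemma fwedge_sumR:
  "fwedge F (\<lambda>ws. \<Sum>i\<in>I. f i ws) us = (\<Sum>i\<in>I. fwedge F (f i) us)"
  unfolding fwedge_eq
  by (simp add: sum_distrib_left sum_distrib_right sum.swap[of _ I] mult.assoc mult.left_commute)

lemma altf_lincomb:
  assumes "\<And>i j. altf (f i j)"
  shows "altf (\<lambda>us. \<Sum>i\<in>I. \<Sum>j\<in>K. c i j * f i j us)"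
  using assms unfolding altf_def by (simp add: sum_distrib_left mult.left_commute)

context tgl
begin

lemma P2:
  assumes B: "orthonormal_cbasis J m e"
  shows "(\<Sum>j<m. hip J x (e j) * hip J u (Tg J g (e j))) = hip J u (Tg J g x)"
proof -
  have "Tg J g x = (\<Sum>j<m. Tg J g (cmul J (hip J (e j) x) (e j)))"
    using basis_coef[OF B, of x] T_sum by metis
  also have "\<dots> = (\<Sum>j<m. cmul J (hip J x (e j)) (Tg J g (e j)))"
    by (simp add: T_cmul hip_conj[of x])
  finally show ?thesis by (simp add: hip_sum2 hip_cmul2)
qed

lemma H_homf: "homf 2 (H_T J m e (Tg J g))"
proof -
  have z: "fwedge (vec1 J (e i)) (vec1 J (e j)) ws = 0" if "length ws \<noteq> 2" for i j ws
  proof -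
    have "homf (1 + 1) (fwedge (vec1 J (e i)) (vec1 J (e j)))" by (rule homf_fwedge[OF homf_vec1 homf_vec1])
    then show ?thesis using that unfolding homf_def one_add_one by blast
  qed
  show ?thesis unfolding homf_def H_T_def using z by simp
qed

lemma H_altf: "altf (H_T J m e (Tg J g))"
  unfolding H_T_def by (rule altf_lincomb) (rule fwedge_alt)

lemma vec1_single: "vec1 J w [u] = hip J u w" by (simp add: vec1_def)

lemma H_ann:
  assumes B: "orthonormal_cbasis J m e"
  shows "(\<lambda>ws. H_T J m e (Tg J g) (u # ws)) = vec1 J ((-2) *\<^sub>R Tg J g u)"
proof
  fix ws
  let ?c = "\<lambda>i j. hip J (e i) (Tg J g (e j))"
  have one: "fwedge (vec1 J (e i)) (vec1 J (e j)) (u # ws) = hip J u (e i) * vec1 J (e j) ws - vec1 J (e i) ws * hip J u (e j)" for i j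
  proof -
    have h0: "homf 0 (\<lambda>ws. vec1 J (e j) (u # ws))" by (rule homf_ann[OF homf_vec1[unfolded One_nat_def]])
    show ?thesis unfolding leib1[OF homf_vec1 altf_vec1 altf_vec1] fwedge_unitR[OF h0 altf_vec1]
      by (simp add: vec1_single)
  qed
  have "H_T J m e (Tg J g) (u # ws) = (\<Sum>i<m. \<Sum>j<m. ?c i j * (hip J u (e i) * vec1 J (e j) ws - vec1 J (e i) ws * hip J u (e j)))"
    unfolding H_T_def one ..
  also have "\<dots> = vec1 J ((-2) *\<^sub>R Tg J g u) ws"
  proof (cases "\<exists>x. ws = [x]")
    case False
    then have "length ws \<noteq> 1" by (metis length_0_conv length_Suc_conv One_nat_def)
    then show ?thesis by (simp add: vec1_def)
  next
    case True
    then obtain x where x: "ws = [x]" by blast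
    have A: "(\<Sum>i<m. \<Sum>j<m. ?c i j * (hip J u (e i) * hip J x (e j))) = - hip J x (Tg J g u)"
    proof -
      have "(\<Sum>i<m. \<Sum>j<m. ?c i j * (hip J u (e i) * hip J x (e j))) = (\<Sum>j<m. \<Sum>i<m. ?c i j * (hip J u (e i) * hip J x (e j)))"
        by (rule sum.swap)
      also have "\<dots> = (\<Sum>j<m. hip J x (e j) * (\<Sum>i<m. hip J u (e i) * ?c i j))"
        unfolding sum_distrib_left by (intro sum.cong refl) (simp add: mult_ac)
      also have "\<dots> = (\<Sum>j<m. hip J x (e j) * hip J u (Tg J g (e j)))"
        by (intro sum.cong refl) (simp only: parseval[OF B, symmetric])
      also have "\<dots> = hip J u (Tg J g x)" by (rule P2[OF B])
      finally show ?thesis using hip_skew[of u x] by simp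
    qed
    have Bs: "(\<Sum>i<m. \<Sum>j<m. ?c i j * (hip J x (e i) * hip J u (e j))) = hip J x (Tg J g u)"
    proof -
      have "(\<Sum>i<m. \<Sum>j<m. ?c i j * (hip J x (e i) * hip J u (e j))) = (\<Sum>j<m. \<Sum>i<m. ?c i j * (hip J x (e i) * hip J u (e j)))"
        by (rule sum.swap)
      also have "\<dots> = (\<Sum>j<m. hip J u (e j) * (\<Sum>i<m. hip J x (e i) * ?c i j))"
        unfolding sum_distrib_left by (intro sum.cong refl) (simp add: mult_ac)
      also have "\<dots> = (\<Sum>j<m. hip J u (e j) * hip J x (Tg J g (e j)))"
        by (intro sum.cong refl) (simp only: parseval[OF B, symmetric])
      also have "\<dots> = hip J x (Tg J g u)" by (rule P2[OF B])
      finally show ?thesis .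
    qed
    have "(\<Sum>i<m. \<Sum>j<m. ?c i j * (hip J u (e i) * vec1 J (e j) ws - vec1 J (e i) ws * hip J u (e j)))
        = (\<Sum>i<m. \<Sum>j<m. ?c i j * (hip J u (e i) * hip J x (e j))) - (\<Sum>i<m. \<Sum>j<m. ?c i j * (hip J x (e i) * hip J u (e j)))"
      unfolding x vec1_single right_diff_distrib sum_subtractf ..
    also have "\<dots> = - 2 * hip J x (Tg J g u)" unfolding A Bs by simp
    also have "\<dots> = vec1 J ((-2) *\<^sub>R Tg J g u) ws" unfolding x vec1_single hip_scale2 by simp
    finally show ?thesis .
  qed
  finally show "H_T J m e (Tg J g) (u # ws) = vec1 J ((-2) *\<^sub>R Tg J g u) ws" .
qed

end

lemma sum_shift_id:
  fixes A :: "nat \<Rightarrow> complex" and c :: "nat \<Rightarrow> complex"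
  assumes cS: "\<And>s. c (Suc s) * (2 * of_nat (Suc s)) = c s"
  shows "(\<Sum>r\<le>N. c r * (if r = 0 then 0 else - (2 * of_nat r) * A (r - 1))) = - (\<Sum>r<N. c r * A r)"
proof (induction N)
  case 0 then show ?case by simp
next
  case (Suc N)
  have "c (Suc N) * (- (2 * of_nat (Suc N)) * A N) = - ((c (Suc N) * (2 * of_nat (Suc N))) * A N)"
    by (simp add: algebra_simps)
  also have "\<dots> = - (c N * A N)" unfolding cS ..
  finally have t: "c (Suc N) * (- (2 * of_nat (Suc N)) * A N) = - (c N * A N)" .
  show ?case unfolding sum.atMost_Suc sum.lessThan_Suc Suc.IH using t by simp
qed

lemma cS_real: "complex_of_real (1 / (2 ^ Suc s * fact (Suc s))) * (2 * of_nat (Suc s)) = complex_of_real (1 / (2 ^ s * fact s))"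
proof -
  have aux: "1 / (2 * b * (a * d)) * (2 * a) = 1 / (b * d)" if "a \<noteq> 0" "b \<noteq> 0" "d \<noteq> 0" for a b d :: real
    using that by (simp add: field_simps)
  have "(1 / (2 ^ Suc s * fact (Suc s))) * (2 * real (Suc s)) = 1 / (2 ^ s * fact s)"
    unfolding power_Suc fact_Suc of_nat_mult by (rule aux) auto
  then show ?thesis by (metis of_real_mult of_real_of_nat_eq of_real_numeral)
qed

theorem lemma4p6:
  fixes J g :: "real^'n \<Rightarrow> real^'n" and m :: nat and e :: "nat \<Rightarrow> real^'n"
  assumes "CARD('n) = 2 * m"
    and "is_complex_structure J"
    and "orthonormal_cbasis J m e"
    and "g \<in> SO_star J"
  shows "\<forall>v. aK J (g \<circ> J \<circ> inv g) (g v) (gaussian J m e (Tg J g)) = fock_zero"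
proof
  fix v
  interpret tgl J g by unfold_locales (use assms in auto)
  note card = assms(1) and B = assms(3)
  define H where "H = H_T J m e (Tg J g)"
  define P where "P r = fwedge_pow H r" for r
  define Yf where "Yf u = vec1 J ((-2) *\<^sub>R Tg J g u)" for u
  have hH: "homf 2 H" unfolding H_def by (rule H_homf)
  have aH: "altf H" unfolding H_def by (rule H_altf)
  have Hann: "(\<lambda>ws. H (u # ws)) = Yf u" for u unfolding H_def Yf_def by (rule H_ann[OF B])
  have hY: "homf 1 (Yf u)" for u unfolding Yf_def by (rule homf_vec1)
  have aY: "altf (Yf u)" for u unfolding Yf_def by (rule altf_vec1)
  have pw: "P (Suc r) (u # us) = of_nat (Suc r) * fwedge (Yf u) (P r) us" for r u us
    unfolding P_def by (rule pow_ann[OF hH aH Hann hY aY])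
  have aP: "altf (P r)" for r unfolding P_def by (rule altf_pow[OF aH])
  have hP: "homf (2 * r) (P r)" for r unfolding P_def by (rule homf_pow[OF hH])
  have Yadd: "Yf (a + b) = (\<lambda>ws. 1 * Yf a ws + 1 * Yf b ws)" for a b
  proof -
    have e: "(-2) *\<^sub>R Tg J g (a + b) = (-2) *\<^sub>R Tg J g a + (-2) *\<^sub>R Tg J g b"
      by (simp only: T_add scaleR_add_right)
    show ?thesis unfolding Yf_def e by (rule ext) (simp only: vec1_add mult_1)
  qed
  have Yscal: "Yf (c *\<^sub>R a) = (\<lambda>ws. complex_of_real c * Yf a ws)" for c a
  proof -
    have e: "(-2) *\<^sub>R Tg J g (c *\<^sub>R a) = c *\<^sub>R ((-2) *\<^sub>R Tg J g a)"
      by (simp only: T_scale scaleR_scaleR mult.commute)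
    show ?thesis unfolding Yf_def e by (rule ext) (simp only: vec1_scale)
  qed
  have YJ: "Yf (J a) = (\<lambda>ws. - \<i> * Yf a ws)" for a
    by (simp add: fun_eq_iff Yf_def T_J vec1_scale vec1_neg vec1_J)
  have Pz: "P r ws = 0" if "m < 2 * r" for r ws
  proof -
    have "r \<noteq> 0" using that by (intro notI) simp
    then obtain r' where r: "r = Suc r'" using not0_implies_Suc by blast
    show ?thesis
    proof (cases "length ws = 2 * r")
      case False then show ?thesis using hP[of r] unfolding homf_def by simp
    next
      case True
      show ?thesis
      proof (rule vanish[OF card assms(2) aP])
        show "P r ((a + b) # ws) = P r (a # ws) + P r (b # ws)" for a b ws
          unfolding r pw Yadd fwedge_linL by (simp add: algebra_simps)
        show "P r ((c *\<^sub>R a) # ws) = complex_of_real c * P r (a # ws)" for c a ws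
          unfolding r pw Yscal fwedge_smultL by (simp add: algebra_simps)
        show "P r (J a # ws) = - \<i> * P r (a # ws)" for a ws
          unfolding r pw YJ fwedge_smultL by (simp add: algebra_simps)
        show "m < length ws" using True that by simp
      qed
    qed
  qed
  define M where "M = m div 2"
  have Rset: "{r. 2 * r \<le> m} = {..M}" unfolding M_def by auto
  define c where "c r = complex_of_real (1 / (2 ^ r * fact r))" for r
  define f where "f = gaussian J m e (Tg J g)"
  have f_eq: "f = (\<lambda>us. \<Sum>r\<le>M. c r * P r us)"
    unfolding f_def gaussian_def Rset c_def P_def H_def by simp
  define Z where "Z = vec1 J (2 *\<^sub>R qg J g v)"
  have K: "(g \<circ> J \<circ> inv g) (g v) = g (J v)" using g_inj by (simp add: inv_f_f)
  show "aK J (g \<circ> J \<circ> inv g) (g v) (gaussian J m e (Tg J g)) = fock_zero"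
  proof
    fix us
    define A where "A r = fwedge Z (P r) us" for r
    have Zeq: "Z = (\<lambda>ws. 1 * vec1 J (g v) ws + \<i> * vec1 J (g (J v)) ws)"
    proof -
      have "2 *\<^sub>R qg J g v = g v + J (g (J v))" by (simp add: qg_def)
      then show ?thesis by (simp add: Z_def fun_eq_iff vec1_add vec1_J)
    qed
    have cre: "fwedge (vec1 J (g v)) f us + \<i> * fwedge (vec1 J (g (J v))) f us = (\<Sum>r\<le>M. c r * A r)"
    proof -
      have "fwedge (vec1 J (g v)) f us + \<i> * fwedge (vec1 J (g (J v))) f us = fwedge Z f us"
        unfolding Zeq fwedge_linL by simp
      also have "\<dots> = (\<Sum>r\<le>M. c r * A r)"
        unfolding f_eq fwedge_sumR fwedge_smultR A_def ..
      finally show ?thesis .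
    qed
    have YZ: "(\<lambda>ws. 1 * Yf (g v) ws + \<i> * Yf (g (J v)) ws) = (\<lambda>ws. (-2) * Z ws)"
    proof -
      have "Tg J g (g v) + J (Tg J g (g (J v))) = 2 *\<^sub>R qg J g v"
      proof -
        have "Tg J g (g v) + J (Tg J g (g (J v))) = Tg J g (g v - J (g (J v)))"
          using linear_diff[OF T_lin, of "g v" "J (g (J v))"] by (simp add: T_J)
        also have "g v - J (g (J v)) = 2 *\<^sub>R pg J g v" by (simp add: pg_def)
        finally show ?thesis by (simp add: T_scale T_P)
      qed
      then have zz: "Z ws = vec1 J (Tg J g (g v)) ws + \<i> * vec1 J (Tg J g (g (J v))) ws" for ws
        unfolding Z_def by (metis vec1_J vec1_add)
      have v2: "vec1 J ((-2) *\<^sub>R y) ws = (-2) * vec1 J y ws" for y ws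
        using vec1_scale[of "-2" y ws] by simp
      show ?thesis
      proof (rule ext)
        fix ws
        show "1 * Yf (g v) ws + \<i> * Yf (g (J v)) ws = (-2) * Z ws"
          unfolding Yf_def v2 zz by (simp add: algebra_simps)
      qed
    qed
    have ann1: "P r (g v # us) + \<i> * P r (g (J v) # us) = (if r = 0 then 0 else - (2 * of_nat r) * A (r - 1))" for r
    proof (cases r)
      case 0 then show ?thesis by (simp add: P_def vacuum_def)
    next
      case (Suc s)
      have "P r (g v # us) + \<i> * P r (g (J v) # us) = of_nat (Suc s) * fwedge (\<lambda>ws. 1 * Yf (g v) ws + \<i> * Yf (g (J v)) ws) (P s) us"
        unfolding Suc pw fwedge_linL by (simp add: algebra_simps)
      also have "\<dots> = - (2 * of_nat r) * A (r - 1)"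
        unfolding YZ fwedge_smultL A_def using Suc by (simp add: algebra_simps)
      finally show ?thesis using Suc by simp
    qed
    have ann: "f (g v # us) + \<i> * f (g (J v) # us) = - (\<Sum>r<M. c r * A r)"
    proof -
      have "f (g v # us) + \<i> * f (g (J v) # us) = (\<Sum>r\<le>M. c r * (P r (g v # us) + \<i> * P r (g (J v) # us)))"
        unfolding f_eq by (simp add: sum.distrib sum_distrib_left algebra_simps)
      also have "\<dots> = (\<Sum>r\<le>M. c r * (if r = 0 then 0 else - (2 * of_nat r) * A (r - 1)))"
        unfolding ann1 ..
      also have "\<dots> = - (\<Sum>r<M. c r * A r)"
        by (rule sum_shift_id) (unfold c_def, rule cS_real)
      finally show ?thesis .
    qed
    have AM: "A M = 0"
    proof -
      have "Yf (- pg J g v) = Z" by (simp add: Yf_def Z_def T_neg T_P)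
      then have "P (Suc M) (- pg J g v # us) = of_nat (Suc M) * A M" unfolding pw A_def by simp
      moreover have "P (Suc M) (- pg J g v # us) = 0" by (rule Pz) (simp add: M_def)
      ultimately show ?thesis by (metis mult_eq_0_iff of_nat_eq_0_iff nat.simps(3))
    qed
    have "(\<Sum>r\<le>M. c r * A r) = (\<Sum>r<M. c r * A r) + c M * A M"
      by (simp add: lessThan_Suc_atMost[symmetric])
    then have tot: "(fwedge (vec1 J (g v)) f us + \<i> * fwedge (vec1 J (g (J v))) f us) + (f (g v # us) + \<i> * f (g (J v) # us)) = 0"
      unfolding cre ann using AM by simp
    show "aK J (g \<circ> J \<circ> inv g) (g v) (gaussian J m e (Tg J g)) us = fock_zero us"
      unfolding K aK_def fock_smult_def fock_add_def field_op_def creation_def annihilation_def fock_zero_def f_def[symmetric]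
      using tot by (simp add: algebra_simps)
  qed
qed

end
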